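(* Let $n$ be an odd integer with prime factorisation $n=p_1^{J_1}\cdots p_s^{J_s}$, where $s\ge2$, the $p_i$ are distinct primes, $J_i\ge1$, and $\prod_{i=1}^r p_i^{J_i}<p_{r+1}$ for every $r\in\{1,\dots,s-1\}$. If $\mathcal{D}_1,\mathcal{D}_2$ are sets of positive divisors of $n$ with $\sum_{d\in\mathcal{D}_1}\phi(n/d)=\sum_{d\in\mathcal{D}_2}\phi(n/d)$, then $\mathcal{D}_1=\mathcal{D}_2$.
   Context: $\phi$ is Euler's totient function. *)

theory Defs
  imports "HOL-Number_Theory.Number_Theory"
begin

end

theory Submission
  imports Defs
begin

definition Pd :: "nat \<Rightarrow> bool" where
 "Pd N \<longleftrightarrow> (\<forall>D1 D2. D1 \<subseteq> {d. d dvd N} \<longrightarrow> D2 \<subseteq> {d. d dvd N} \<longrightarrow>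
     (\<Sum>d\<in>D1. totient (N div d)) = (\<Sum>d\<in>D2. totient (N div d)) \<longrightarrow> D1 = D2)"

lemma sum_div_totient:
  assumes "N > 0" shows "(\<Sum>d | d dvd N. totient (N div d)) = N"
proof -
  have "(\<Sum>d | d dvd N. totient (N div d)) = (\<Sum>d | d dvd N. totient d)"
    by (rule sum.reindex_bij_witness[of _ "\<lambda>d. N div d" "\<lambda>d. N div d"])
       (use assms in \<open>auto elim!: dvdE\<close>)
  thus ?thesis by (simp add: totient_divisor_sum)
qed

lemma sub_le:
  assumes "N > 0" "D \<subseteq> {d. d dvd N}"
  shows "(\<Sum>d\<in>D. totient (N div d)) \<le> N"
proof -
  have "(\<Sum>d\<in>D. totient (N div d)) \<le> (\<Sum>d | d dvd N. totient (N div d))"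
    by (rule sum_mono2) (use assms in auto)
  thus ?thesis using sum_div_totient[OF assms(1)] by simp
qed

lemma Pd_1: "Pd 1"
  unfolding Pd_def
proof (intro allI impI)
  fix D1 D2 :: "nat set"
  assume a: "D1 \<subseteq> {d. d dvd 1}" "D2 \<subseteq> {d. d dvd 1}"
     and e: "(\<Sum>d\<in>D1. totient (1 div d)) = (\<Sum>d\<in>D2. totient (1 div d))"
  have "D1 \<subseteq> {1}" "D2 \<subseteq> {1}" using a by auto
  hence "(D1 = {} \<or> D1 = {1}) \<and> (D2 = {} \<or> D2 = {1})" by blast
  thus "D1 = D2" using e by auto
qed

lemma step:
  assumes q: "prime q" and m0: "m > 0" and nd: "\<not> q dvd m" and lt: "m + 1 < q"
    and Pm: "Pd m" and PM: "Pd (m * q^J)"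
  shows "Pd (m * q^Suc J)"
  unfolding Pd_def
proof (intro allI impI)
  define N where "N = m * q^Suc J"
  define M where "M = m * q^J"
  define K where "K = q^J * (q - 1)"
  have q0: "q > 1" using q prime_gt_1_nat by blast
  have N0: "N > 0" unfolding N_def using m0 q0 by simp
  have M0: "M > 0" unfolding M_def using m0 q0 by simp
  have NM: "N = M * q" unfolding N_def M_def by simp
  have cmq: "coprime m q" using nd q prime_imp_coprime[of q m] coprime_commute by blast
  have MK: "M < K"
  proof -
    have "m < q - 1" using lt by simp
    moreover have "q^J > 0" using q0 by simp
    ultimately show ?thesis unfolding M_def K_def by simp
  qed
  have split: "(\<Sum>d\<in>D. totient (N div d)) =
      (\<Sum>e\<in>(\<lambda>d. d div q) ` {d\<in>D. q dvd d}. totient (M div e))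
      + K * (\<Sum>d\<in>{d\<in>D. \<not> q dvd d}. totient (m div d))"
    and sub1: "(\<lambda>d. d div q) ` {d\<in>D. q dvd d} \<subseteq> {d. d dvd M}"
    and sub2: "{d\<in>D. \<not> q dvd d} \<subseteq> {d. d dvd m}"
    if D: "D \<subseteq> {d. d dvd N}" for D
  proof -
    have fin: "finite D" using D N0 finite_subset[OF D] by (simp add: finite_divisors_nat)
    have Du: "D = {d\<in>D. q dvd d} \<union> {d\<in>D. \<not> q dvd d}" by blast
    have s0: "(\<Sum>d\<in>D. totient (N div d)) = (\<Sum>d\<in>{d\<in>D. q dvd d}. totient (N div d))
         + (\<Sum>d\<in>{d\<in>D. \<not> q dvd d}. totient (N div d))"
      by (subst Du, rule sum.union_disjoint) (use fin in auto)
    have inj: "inj_on (\<lambda>d. d div q) {d\<in>D. q dvd d}"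
      by (rule inj_onI) (auto elim!: dvdE)
    have s1: "(\<Sum>e\<in>(\<lambda>d. d div q) ` {d\<in>D. q dvd d}. totient (M div e))
        = (\<Sum>d\<in>{d\<in>D. q dvd d}. totient (N div d))"
    proof (subst sum.reindex[OF inj], rule sum.cong)
      fix d assume "d \<in> {d\<in>D. q dvd d}"
      then obtain k where k: "d = q * k" by (auto elim!: dvdE)
      have "N div d = M div k" unfolding NM k using q0
        by (metis div_mult_mult2 mult.commute not_one_less_zero bot_nat_0.not_eq_extremum)
      thus "((\<lambda>e. totient (M div e)) \<circ> (\<lambda>d. d div q)) d = totient (N div d)"
        using k q0 by simp
    qed simp
    have s2: "(\<Sum>d\<in>{d\<in>D. \<not> q dvd d}. totient (N div d))
        = K * (\<Sum>d\<in>{d\<in>D. \<not> q dvd d}. totient (m div d))"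
      unfolding sum_distrib_left
    proof (rule sum.cong)
      fix d assume d: "d \<in> {d\<in>D. \<not> q dvd d}"
      have "coprime d q" using d q prime_imp_coprime[of q d] coprime_commute by blast
      hence "coprime d (q^Suc J)" by simp
      moreover have "d dvd m * q^Suc J" using d D N_def by auto
      ultimately have dm: "d dvd m" using coprime_dvd_mult_left_iff by blast
      have "N div d = (m div d) * q^Suc J" unfolding N_def using dm
        by (metis dvd_div_mult)
      moreover have "coprime (m div d) (q^Suc J)"
        using cmq dm by (metis coprime_commute coprime_power_right_iff dvd_div_iff_mult
              coprime_mult_left_iff dvd_mult_div_cancel)
      ultimately have "totient (N div d) = totient (m div d) * totient (q^Suc J)"
        by (simp add: totient_mult_coprime)
      also have "\<dots> = K * totient (m div d)" using totient_prime_power_Suc[OF q, of J] unfolding K_def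
        by simp
      finally show "totient (N div d) = K * totient (m div d)" .
    qed simp
    show "(\<Sum>d\<in>D. totient (N div d)) =
      (\<Sum>e\<in>(\<lambda>d. d div q) ` {d\<in>D. q dvd d}. totient (M div e))
      + K * (\<Sum>d\<in>{d\<in>D. \<not> q dvd d}. totient (m div d))"
      using s0 s1 s2 by simp
    show "(\<lambda>d. d div q) ` {d\<in>D. q dvd d} \<subseteq> {d. d dvd M}"
    proof
      fix e assume "e \<in> (\<lambda>d. d div q) ` {d\<in>D. q dvd d}"
      then obtain d where d: "d \<in> D" "q dvd d" "e = d div q" by auto
      then obtain k where k: "d = q * k" by (auto elim!: dvdE)
      have "q * k dvd q * M" using d D k NM by (auto simp: ac_simps)
      hence "k dvd M" using q0 by simp
      thus "e \<in> {d. d dvd M}" using d k q0 by simp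
    qed
    show "{d\<in>D. \<not> q dvd d} \<subseteq> {d. d dvd m}"
    proof
      fix d assume d: "d \<in> {d\<in>D. \<not> q dvd d}"
      have "coprime d q" using d q prime_imp_coprime[of q d] coprime_commute by blast
      hence "coprime d (q^Suc J)" by simp
      moreover have "d dvd m * q^Suc J" using d D N_def by auto
      ultimately show "d \<in> {d. d dvd m}" using coprime_dvd_mult_left_iff by blast
    qed
  qed
  fix D1 D2 :: "nat set"
  assume D1: "D1 \<subseteq> {d. d dvd m * q ^ Suc J}" and D2: "D2 \<subseteq> {d. d dvd m * q ^ Suc J}"
    and e: "(\<Sum>d\<in>D1. totient (m * q ^ Suc J div d)) = (\<Sum>d\<in>D2. totient (m * q ^ Suc J div d))"
  have D1': "D1 \<subseteq> {d. d dvd N}" and D2': "D2 \<subseteq> {d. d dvd N}" using D1 D2 N_def by auto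
  define A1 where "A1 = (\<Sum>e\<in>(\<lambda>d. d div q) ` {d\<in>D1. q dvd d}. totient (M div e))"
  define A2 where "A2 = (\<Sum>e\<in>(\<lambda>d. d div q) ` {d\<in>D2. q dvd d}. totient (M div e))"
  define B1 where "B1 = (\<Sum>d\<in>{d\<in>D1. \<not> q dvd d}. totient (m div d))"
  define B2 where "B2 = (\<Sum>d\<in>{d\<in>D2. \<not> q dvd d}. totient (m div d))"
  have eq: "A1 + K * B1 = A2 + K * B2"
    using e split[OF D1'] split[OF D2'] unfolding A1_def A2_def B1_def B2_def N_def by simp
  have A1K: "A1 < K" using sub_le[OF M0 sub1[OF D1']] MK unfolding A1_def by simp
  have A2K: "A2 < K" using sub_le[OF M0 sub1[OF D2']] MK unfolding A2_def by simp
  have "(A1 + K * B1) mod K = A1" "(A2 + K * B2) mod K = A2" using A1K A2K by simp_all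
  hence A: "A1 = A2" using eq by simp
  hence B: "B1 = B2" using eq MK by simp
  have I: "(\<lambda>d. d div q) ` {d\<in>D1. q dvd d} = (\<lambda>d. d div q) ` {d\<in>D2. q dvd d}"
    using PM sub1[OF D1'] sub1[OF D2'] A unfolding Pd_def A1_def A2_def M_def by blast
  have II: "{d\<in>D1. \<not> q dvd d} = {d\<in>D2. \<not> q dvd d}"
    using Pm sub2[OF D1'] sub2[OF D2'] B unfolding Pd_def B1_def B2_def by blast
  have rec: "{d\<in>D. q dvd d} = (\<lambda>e. q * e) ` ((\<lambda>d. d div q) ` {d\<in>D. q dvd d})" for D
    by (auto simp: image_image elim!: dvdE)
  have "{d\<in>D1. q dvd d} = {d\<in>D2. q dvd d}" using rec[of D1] rec[of D2] I by simp
  thus "D1 = D2" using II by blast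
qed

lemma Pd_pow:
  assumes "prime q" "m > 0" "\<not> q dvd m" "m + 1 < q" "Pd m"
  shows "Pd (m * q^J)"
proof (induction J)
  case 0 thus ?case using assms by simp
next
  case (Suc J) thus ?case using step[OF assms] by blast
qed

theorem lemma3p4:
  fixes n s :: nat and p J :: "nat \<Rightarrow> nat" and D1 D2 :: "nat set"
  assumes "odd n"
    and "s \<ge> 2"
    and "\<And>i. i < s \<Longrightarrow> prime (p i)"
    and "inj_on p {..<s}"
    and "\<And>i. i < s \<Longrightarrow> J i \<ge> 1"
    and "n = (\<Prod>i<s. p i ^ J i)"
    and "\<And>r. 1 \<le> r \<Longrightarrow> r \<le> s - 1 \<Longrightarrow> (\<Prod>i<r. p i ^ J i) < p r"
    and "D1 \<subseteq> {d. d > 0 \<and> d dvd n}"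
    and "D2 \<subseteq> {d. d > 0 \<and> d dvd n}"
    and "(\<Sum>d\<in>D1. totient (n div d)) = (\<Sum>d\<in>D2. totient (n div d))"
  shows "D1 = D2"
proof -
  define N where "N r = (\<Prod>i<r. p i ^ J i)" for r
  have Npos: "N r > 0" if "r \<le> s" for r
    unfolding N_def using that assms(3) prime_gt_0_nat by (auto intro!: prod_pos)
  have Ndvd: "N r dvd n" if "r \<le> s" for r
    unfolding N_def assms(6) using that by (intro prod_dvd_prod_subset) auto
  have "Pd (N r)" if "r \<le> s" for r
    using that
  proof (induction r)
    case 0 thus ?case using Pd_1 by (simp add: N_def)
  next
    case (Suc r)
    have r: "r < s" using Suc by simp
    have pr: "prime (p r)" using assms(3) r by simp
    have "p r dvd p r ^ J r" using assms(5)[OF r] by (simp add: dvd_power)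
    moreover have "p r ^ J r dvd n" unfolding assms(6) using r by (intro dvd_prodI) auto
    ultimately have "p r dvd n" by (rule dvd_trans)
    hence op: "odd (p r)" using assms(1) by (meson dvd_trans)
    have oN: "odd (N r)" using Ndvd[of r] r assms(1) by (meson dvd_trans less_imp_le)
    have lt: "N r < p r"
    proof (cases "r = 0")
      case True thus ?thesis using pr prime_gt_1_nat by (simp add: N_def)
    next
      case False thus ?thesis using assms(7)[of r] r by (simp add: N_def)
    qed
    have lt2: "N r + 1 < p r"
    proof -
      have "N r + 1 \<noteq> p r" using oN op by presburger
      thus ?thesis using lt by simp
    qed
    have nd: "\<not> p r dvd N r" using lt Npos[of r] r by (meson dvd_imp_le less_imp_le not_less)
    have "N (Suc r) = N r * p r ^ J r" by (simp add: N_def)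
    thus ?case using Pd_pow[OF pr Npos[of r] nd lt2 Suc.IH] r by simp
  qed
  hence "Pd n" using assms(6) by (simp add: N_def)
  thus ?thesis using assms(8-10) unfolding Pd_def by blast
qed

end
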